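(* There is a constant $c>0$ such that for all integers $n,m$ with $1\le m<n$ there is an instance $(\mathcal{I},\mathcal{T},p^0)$ of the Shape Reconfiguration Problem with $|\mathcal{I}|=|\mathcal{T}|=n$ and $|\mathcal{I}\setminus\mathcal{T}|=m$ (with both $\mathcal{I}$ and $\mathcal{T}$ simply connected) such that every valid sequence of legal agent actions solving it has length at least $c\,mn$. Concretely, one may take $\mathcal{I}=\{v_1,\dots,v_n\}$ and $\mathcal{T}=\{v_{m+1},\dots,v_{n+m}\}$ where $v_{i+1}=v_i+(0,2)$ (a straight line of nodes), with $p^0=v_n$.
   Context: Hybrid model. Let $G=(V,E)$ be the infinite triangular lattice with $V=\{(x,y)\in\mathbb{Z}^2 : x+y \text{ even}\}$, where the six neighbors of a node $v$ are $v+\vec d$ for $\vec d\in\{(0,-2),(1,-1),(1,1),(0,2),(-1,1),(-1,-1)\}$. A set $S\subseteq V$ is connected if $G[S]$ is connected, and simply connected if $V\setminus S$ is connected. A single agent and finitely many indistinguishable tiles occupy nodes; each node holds at most one tile; the agent occupies one node and carries at most one tile. A configuration $(\mathcal{C},p)$ ($\mathcal{C}$ = tiled nodes, $p$ = agent node) is connected if $\mathcal{C}$ is connected, or if the agent carries a tile and $\mathcal{C}\cup\{p\}$ is connected. In each time step the agent performs one action: move to an adjacent node, lift the tile at its node (if not carrying one), or place its carried tile at its node (if untiled); every resulting configuration must be connected. Shape Reconfiguration Problem: given connected $\mathcal{I},\mathcal{T}\subseteq V$ with $|\mathcal{I}|=|\mathcal{T}|=n$, $\mathcal{I}\cap\mathcal{T}$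 non-empty and connected, and $p^0\in\mathcal{I}$ (initial tiled set $\mathcal{I}$, agent not carrying a tile), a solution is a sequence of connected configurations, each obtained from the previous by one legal action, ending with tiled set exactly $\mathcal{T}$; its length is the number of actions. *)

theory Defs
  imports Complex_Main
begin

type_synonym node = "int \<times> int"

text \<open>Nodes of the infinite triangular lattice.\<close>
definition lattice_nodes :: "node set" where
  "lattice_nodes = {(x, y). even (x + y)}"

definition directions :: "node set" where
  "directions = {(0, -2), (1, -1), (1, 1), (0, 2), (-1, 1), (-1, -1)}"

definition adj :: "node \<Rightarrow> node \<Rightarrow> bool" where
  "adj u v \<longleftrightarrow> u \<in> lattice_nodes \<and>
     (\<exists>(dx, dy) \<in> directions. v = (fst u + dx, snd u + dy))"

definition walk_in :: "node set \<Rightarrow> node list \<Rightarrow> bool" where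
  "walk_in S ps \<longleftrightarrow> ps \<noteq> [] \<and> set ps \<subseteq> S \<and>
     (\<forall>i. Suc i < length ps \<longrightarrow> adj (ps ! i) (ps ! Suc i))"

definition conn_set :: "node set \<Rightarrow> bool" where
  "conn_set S \<longleftrightarrow> S \<subseteq> lattice_nodes \<and>
     (\<forall>u \<in> S. \<forall>v \<in> S. \<exists>ps. walk_in S ps \<and> hd ps = u \<and> last ps = v)"

definition simply_conn :: "node set \<Rightarrow> bool" where
  "simply_conn S \<longleftrightarrow> conn_set (lattice_nodes - S)"

text \<open>Configurations: (tiled nodes, agent position, agent carries a tile).\<close>
type_synonym config = "node set \<times> node \<times> bool"

definition conf_connected :: "config \<Rightarrow> bool" where
  "conf_connected c = (case c of (C, p, b) \<Rightarrow>
     conn_set C \<or> (b \<and> conn_set (insert p C)))"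

definition step :: "config \<Rightarrow> config \<Rightarrow> bool" where
  "step c c' = (case c of (C, p, b) \<Rightarrow> case c' of (C', p', b') \<Rightarrow>
       (C' = C \<and> b' = b \<and> adj p p')
     \<or> (p' = p \<and> p \<in> C \<and> \<not> b \<and> C' = C - {p} \<and> b')
     \<or> (p' = p \<and> p \<notin> C \<and> b \<and> C' = insert p C \<and> \<not> b'))"

definition valid_instance :: "node set \<Rightarrow> node set \<Rightarrow> node \<Rightarrow> bool" where
  "valid_instance I T p0 \<longleftrightarrow> finite I \<and> finite T \<and> card I = card T \<and>
     conn_set I \<and> conn_set T \<and> I \<inter> T \<noteq> {} \<and> conn_set (I \<inter> T) \<and> p0 \<in> I"

text \<open>Its length (number of actions) is length cs - 1.\<close>
definition is_solution :: "node set \<Rightarrow> node set \<Rightarrow> node \<Rightarrow> config list \<Rightarrow> bool" where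
  "is_solution I T p0 cs \<longleftrightarrow> cs \<noteq> [] \<and> hd cs = (I, p0, False) \<and>
     (\<forall>c \<in> set cs. conf_connected c) \<and>
     (\<forall>i. Suc i < length cs \<longrightarrow> step (cs ! i) (cs ! Suc i)) \<and>
     fst (last cs) = T"

definition line_node :: "nat \<Rightarrow> node" where
  "line_node i = (0, 2 * int i)"

end

theory Submission imports Defs begin

definition E :: "node set \<Rightarrow> node \<Rightarrow> node \<Rightarrow> bool" where
  "E S u v \<longleftrightarrow> adj u v \<and> u \<in> S \<and> v \<in> S"

lemma adj_sym: "adj u v \<Longrightarrow> v \<in> lattice_nodes \<Longrightarrow> adj v u"
  by (cases u; cases v) (auto simp: adj_def directions_def)

lemma E_I: "even (x+y) \<Longrightarrow> (x'-x, y'-y) \<in> directions \<Longrightarrow> (x,y) \<in> S \<Longrightarrow> (x',y') \<in> S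
   \<Longrightarrow> E S (x,y) (x',y')"
  unfolding E_def adj_def lattice_nodes_def by force

lemma rt_sym: assumes "S \<subseteq> lattice_nodes" "(E S)\<^sup>*\<^sup>* u v" shows "(E S)\<^sup>*\<^sup>* v u"
  using assms(2)
proof (induction rule: rtranclp_induct)
  case base then show ?case by simp
next
  case (step y z)
  have "E S z y" using step(2) assms(1) adj_sym unfolding E_def by blast
  then show ?case using step(3) by (meson converse_rtranclp_into_rtranclp)
qed

lemma walk_from_rt: "(E S)\<^sup>*\<^sup>* u v \<Longrightarrow> u \<in> S \<Longrightarrow> \<exists>ps. walk_in S ps \<and> hd ps = u \<and> last ps = v"
proof (induction rule: rtranclp_induct)
  case base then show ?case by (intro exI[of _ "[u]"]) (auto simp: walk_in_def)
next
  case (step y z)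
  then obtain ps where ps: "walk_in S ps" "hd ps = u" "last ps = y" by blast
  have "walk_in S (ps @ [z])"
    unfolding walk_in_def
  proof (intro conjI allI impI)
    show "ps @ [z] \<noteq> []" by simp
    show "set (ps @ [z]) \<subseteq> S" using ps(1) step(2) by (auto simp: walk_in_def E_def)
    fix i assume i: "Suc i < length (ps @ [z])"
    show "adj ((ps @ [z]) ! i) ((ps @ [z]) ! Suc i)"
    proof (cases "Suc i < length ps")
      case True then show ?thesis using ps(1) by (auto simp: walk_in_def nth_append)
    next
      case False
      then have "i = length ps - 1" "Suc i = length ps" using i by auto
      moreover have "ps ! (length ps - 1) = y" using ps(1,3) by (simp add: walk_in_def last_conv_nth)
      ultimately show ?thesis using step(2) ps(1) by (auto simp: walk_in_def nth_append E_def)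
    qed
  qed
  then show ?case using ps by (intro exI[of _ "ps @ [z]"]) (auto simp: walk_in_def)
qed

lemma conn_setI:
  assumes "S \<subseteq> lattice_nodes" "h \<in> S" "\<And>u. u \<in> S \<Longrightarrow> (E S)\<^sup>*\<^sup>* u h"
  shows "conn_set S"
  unfolding conn_set_def
proof (intro conjI ballI)
  fix u v assume "u \<in> S" "v \<in> S"
  then have "(E S)\<^sup>*\<^sup>* u v" using assms rt_sym by (meson rtranclp_trans)
  then show "\<exists>ps. walk_in S ps \<and> hd ps = u \<and> last ps = v" using walk_from_rt \<open>u \<in> S\<close> by blast
qed (use assms in auto)

lemma line_lattice: "line_node ` A \<subseteq> lattice_nodes"
  by (auto simp: line_node_def lattice_nodes_def)

lemma conn_line: assumes "a \<le> b" shows "conn_set (line_node ` {a..b})"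
proof (rule conn_setI[OF line_lattice, of "line_node a"])
  show "line_node a \<in> line_node ` {a..b}" using assms by auto
  have *: "a + k \<le> b \<longrightarrow> (E (line_node ` {a..b}))\<^sup>*\<^sup>* (line_node (a+k)) (line_node a)" for k
  proof (induction k)
    case 0 then show ?case by simp
  next
    case (Suc k)
    show ?case
    proof
      assume k: "a + Suc k \<le> b"
      have m1: "line_node (a + Suc k) \<in> line_node ` {a..b}" "line_node (a + k) \<in> line_node ` {a..b}"
        using k by auto
      have "E (line_node ` {a..b}) (line_node (a + Suc k)) (line_node (a+k))"
        using m1 unfolding line_node_def
        by (intro E_I) (auto simp: directions_def)
      then show "(E (line_node ` {a..b}))\<^sup>*\<^sup>* (line_node (a + Suc k)) (line_node a)"
        using Suc.IH k by (metis converse_rtranclp_into_rtranclp Suc_leD add_Suc_right)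
    qed
  qed
  show "\<And>u. u \<in> line_node ` {a..b} \<Longrightarrow> (E (line_node ` {a..b}))\<^sup>*\<^sup>* u (line_node a)"
  proof -
    fix u assume "u \<in> line_node ` {a..b}"
    then obtain k where "a \<le> k" "k \<le> b" "u = line_node k" by auto
    then show "(E (line_node ` {a..b}))\<^sup>*\<^sup>* u (line_node a)" using *[of "k-a"] by simp
  qed
qed

context
  fixes a b :: nat and S
  assumes a1: "1 \<le> a"
  defines "S \<equiv> lattice_nodes - line_node ` {a..b}"
begin

lemma memS: "(x,y) \<in> S \<longleftrightarrow> even (x+y) \<and> \<not> (x = 0 \<and> (\<exists>i\<in>{a..b}. y = 2 * int i))"
  unfolding S_def lattice_nodes_def line_node_def by auto

lemma vert: "x \<noteq> 0 \<Longrightarrow> even (x+y) \<Longrightarrow> (E S)\<^sup>*\<^sup>* (x, y + 2 * int k) (x,y)"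
proof (induction k)
  case 0 then show ?case by simp
next
  case (Suc k)
  have "E S (x, y + 2 * int (Suc k)) (x, y + 2 * int k)"
    by (rule E_I) (use Suc.prems in \<open>auto simp: directions_def memS\<close>)
  then show ?case using Suc by (meson converse_rtranclp_into_rtranclp)
qed

lemma Ssub: "S \<subseteq> lattice_nodes" unfolding S_def by auto

lemma col1: "even (1+y) \<Longrightarrow> (E S)\<^sup>*\<^sup>* (1,y) (1,1)"
proof (cases "y \<ge> 1")
  case True
  assume e: "even (1+y)"
  define k where "k = nat ((y-1) div 2)"
  have "y = 1 + 2 * int k" using True e unfolding k_def by (auto elim!: evenE)
  then show ?thesis using vert[of 1 1 k] by simp
next
  case False
  assume e: "even (1+y)"
  define k where "k = nat ((1-y) div 2)"
  have eq: "y + 2 * int k = 1" using False e unfolding k_def by (auto elim!: evenE)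
  have "(E S)\<^sup>*\<^sup>* (1, y + 2 * int k) (1,y)" using vert[of 1 y k] e by simp
  then have "(E S)\<^sup>*\<^sup>* (1, 1) (1,y)" using eq by simp
  then show ?thesis using rt_sym[OF Ssub] by blast
qed

lemma right: "\<forall>y. even (1 + int k + y) \<longrightarrow> (E S)\<^sup>*\<^sup>* (1 + int k, y) (1,1)"
proof (induction k)
  case 0 then show ?case using col1 by simp
next
  case (Suc k)
  show ?case
  proof (intro allI impI)
    fix y assume e: "even (1 + int (Suc k) + y)"
    have "E S (1 + int (Suc k), y) (1 + int k, y + 1)"
      by (rule E_I) (use e in \<open>auto simp: directions_def memS\<close>)
    moreover have "even (1 + int k + (y+1))" using e by (simp add: algebra_simps)
    ultimately show "(E S)\<^sup>*\<^sup>* (1 + int (Suc k), y) (1,1)"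
      using Suc by (meson converse_rtranclp_into_rtranclp)
  qed
qed

lemma left: "\<forall>y. even (-1 - int k + y) \<longrightarrow> (E S)\<^sup>*\<^sup>* (-1 - int k, y) (1,1)"
proof (induction k)
  case 0
  show ?case
  proof (intro allI impI)
    fix y assume e: "even (-1 - int 0 + y)"
    have "(E S)\<^sup>*\<^sup>* (-1, y) (-1, 1)"
    proof (cases "y \<ge> 1")
      case True
      define k where "k = nat ((y-1) div 2)"
      have "y = 1 + 2 * int k" using True e unfolding k_def by (auto elim!: evenE)
      then show ?thesis using vert[of "-1" 1 k] by simp
    next
      case False
      define k where "k = nat ((1-y) div 2)"
      have eq: "y + 2 * int k = 1" using False e unfolding k_def by (auto elim!: evenE)
      have "(E S)\<^sup>*\<^sup>* (-1, y + 2 * int k) (-1,y)" using vert[of "-1" y k] e by simp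
      then have "(E S)\<^sup>*\<^sup>* (-1, 1) (-1,y)" using eq by simp
      then show ?thesis using rt_sym[OF Ssub] by blast
    qed
    moreover have "E S (-1, 1) (0,0)" by (rule E_I) (use a1 in \<open>auto simp: directions_def memS\<close>)
    moreover have "E S (0,0) (1,1)" by (rule E_I) (use a1 in \<open>auto simp: directions_def memS\<close>)
    ultimately show "(E S)\<^sup>*\<^sup>* (-1 - int 0, y) (1,1)" by simp
  qed
next
  case (Suc k)
  show ?case
  proof (intro allI impI)
    fix y assume e: "even (-1 - int (Suc k) + y)"
    have "E S (-1 - int (Suc k), y) (-1 - int k, y + 1)"
      by (rule E_I) (use e in \<open>auto simp: directions_def memS\<close>)
    moreover have "even (-1 - int k + (y+1))" using e by (simp add: algebra_simps)
    ultimately show "(E S)\<^sup>*\<^sup>* (-1 - int (Suc k), y) (1,1)"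
      using Suc by (meson converse_rtranclp_into_rtranclp)
  qed
qed

lemma hub: assumes "u \<in> S" shows "(E S)\<^sup>*\<^sup>* u (1,1)"
proof -
  obtain x y where u: "u = (x,y)" by (cases u)
  have e: "even (x+y)" using assms u memS by auto
  consider "x \<ge> 1" | "x \<le> -1" | "x = 0" by linarith
  then show ?thesis
  proof cases
    case 1
    then show ?thesis using right[of "nat (x-1)"] e u by simp
  next
    case 2
    then show ?thesis using left[of "nat (-x-1)"] e u by simp
  next
    case 3
    have "E S (x,y) (1, y+1)" by (rule E_I) (use assms u e 3 in \<open>auto simp: directions_def memS\<close>)
    moreover have "(E S)\<^sup>*\<^sup>* (1, y+1) (1,1)" using right[of 0] e 3 by (simp add: algebra_simps)
    ultimately show ?thesis using u by (meson converse_rtranclp_into_rtranclp)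
  qed
qed

lemma simply_line: "simply_conn (line_node ` {a..b})"
  unfolding simply_conn_def
  using conn_setI[OF Ssub, of "(1,1)"] hub memS unfolding S_def by auto

end


definition Phi :: "config \<Rightarrow> int" where
  "Phi c = (case c of (C,p,b) \<Rightarrow> (\<Sum>q\<in>C. snd q) + (if b then snd p else 0))"
definition tiles :: "config \<Rightarrow> nat" where
  "tiles c = (case c of (C,p,b) \<Rightarrow> card C + (if b then 1 else 0))"

lemma adj_bound: "adj p p' \<Longrightarrow> \<bar>snd p' - snd p\<bar> \<le> 2"
  by (cases p; cases p') (auto simp: adj_def directions_def)

lemma step_props: assumes "step c c'" "finite (fst c)"
  shows "finite (fst c') \<and> tiles c' = tiles c \<and> \<bar>Phi c' - Phi c\<bar> \<le> 2"
proof -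
  obtain C p b where c: "c = (C,p,b)" by (cases c) auto
  obtain C' p' b' where c': "c' = (C',p',b')" by (cases c') auto
  have f: "finite C" using assms(2) c by simp
  from assms(1) consider "C' = C \<and> b' = b \<and> adj p p'"
    | "p' = p \<and> p \<in> C \<and> \<not> b \<and> C' = C - {p} \<and> b'"
    | "p' = p \<and> p \<notin> C \<and> b \<and> C' = insert p C \<and> \<not> b'"
    unfolding step_def c c' by auto
  then show ?thesis
  proof cases
    case 1 then show ?thesis using f adj_bound[of p p'] unfolding c c' Phi_def tiles_def by auto
  next
    case 2
    then have "card C \<ge> 1" using f by (metis One_nat_def Suc_leI card_gt_0_iff empty_iff)
    moreover have "sum snd C = snd p + sum snd (C - {p})" using 2 f by (meson sum.remove)
    ultimately show ?thesis using 2 f unfolding c c' Phi_def tiles_def by auto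
  next
    case 3 then show ?thesis using f unfolding c c' Phi_def tiles_def by auto
  qed
qed

lemma sum_line: "sum snd (line_node ` A) = (\<Sum>i\<in>A. 2 * int i)"
proof -
  have "inj_on line_node A" by (auto simp: inj_on_def line_node_def)
  from sum.reindex[OF this, of snd] show ?thesis by (simp add: o_def line_node_def)
qed

lemma gauss_diff: "(\<Sum>i=Suc m..n+m. int i) - (\<Sum>i=1..n. int i) = int m * int n"
proof (induction n)
  case 0 then show ?case by simp
next
  case (Suc n)
  have "(\<Sum>i=Suc m..Suc n+m. int i) = (\<Sum>i=Suc m..n+m. int i) + int (Suc n + m)"
    by (simp add: sum.cl_ivl_Suc)
  moreover have "(\<Sum>i=1..Suc n. int i) = (\<Sum>i=1..n. int i) + int (Suc n)"
    by (simp add: sum.cl_ivl_Suc)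
  ultimately show ?case using Suc by (simp add: algebra_simps)
qed

lemma sol_inv: assumes "is_solution I T p0 cs" "finite I"
  shows "k < length cs \<Longrightarrow> finite (fst (cs!k)) \<and> tiles (cs!k) = card I \<and> \<bar>Phi (cs!k) - Phi (cs!0)\<bar> \<le> 2 * int k"
proof (induction k)
  case 0
  have "cs ! 0 = (I, p0, False)" using assms(1) unfolding is_solution_def by (metis hd_conv_nth)
  then show ?case using assms(2) by (simp add: tiles_def)
next
  case (Suc k)
  have st: "step (cs!k) (cs!Suc k)" using assms(1) Suc.prems unfolding is_solution_def by blast
  have ih: "finite (fst (cs!k)) \<and> tiles (cs!k) = card I \<and> \<bar>Phi (cs!k) - Phi (cs!0)\<bar> \<le> 2 * int k"
    using Suc by simp
  show ?case using step_props[OF st] ih by auto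
qed

theorem mainTheorem2:
  shows "\<exists>c::real. c > 0 \<and>
    (\<forall>n m :: nat. 1 \<le> m \<and> m < n \<longrightarrow>
      (let I = line_node ` {1..n}; T = line_node ` {m+1..n+m}; p0 = line_node n in
        valid_instance I T p0 \<and> card I = n \<and> card T = n \<and> card (I - T) = m \<and>
        simply_conn I \<and> simply_conn T \<and>
        (\<forall>cs. is_solution I T p0 cs \<longrightarrow> real (length cs - 1) \<ge> c * real m * real n)))"
proof (intro exI[of _ 1] conjI allI impI)
  fix n m :: nat assume nm: "1 \<le> m \<and> m < n"
  define I where "I = line_node ` {1..n}"
  define T where "T = line_node ` {m+1..n+m}"
  have inj: "inj line_node" by (auto simp: inj_def line_node_def)
  have cI: "card I = n" unfolding I_def using card_image[OF inj_on_subset[OF inj]] by simp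
  have cT: "card T = n" unfolding T_def using card_image[OF inj_on_subset[OF inj]] by simp
  have IT: "I \<inter> T = line_node ` {m+1..n}" unfolding I_def T_def
    using image_Int[OF inj] nm by (metis Int_atLeastAtMost max.absorb2 min.absorb1 le_add1 le_add2 Suc_eq_plus1 less_eq_Suc_le)
  have ImT: "I - T = line_node ` {1..m}" unfolding I_def T_def image_set_diff[OF inj, symmetric]
    using nm by (intro arg_cong[where f="image line_node"]) auto
  have cImT: "card (I - T) = m" unfolding ImT using card_image[OF inj_on_subset[OF inj]] by simp
  have vi: "valid_instance I T (line_node n)"
    unfolding valid_instance_def
    using cI cT IT nm conn_line[of 1 n] conn_line[of "m+1" "n+m"] conn_line[of "m+1" n]
    unfolding I_def T_def by auto
  have sI: "simply_conn I" unfolding I_def by (rule simply_line) simp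
  have sT: "simply_conn T" unfolding T_def by (rule simply_line) simp
  have lb: "real (length cs - 1) \<ge> 1 * real m * real n" if sol: "is_solution I T (line_node n) cs" for cs
  proof -
    have ne: "cs \<noteq> []" using sol unfolding is_solution_def by simp
    define k where "k = length cs - 1"
    have kl: "k < length cs" using ne unfolding k_def by simp
    have inv: "finite (fst (cs!k)) \<and> tiles (cs!k) = card I \<and> \<bar>Phi (cs!k) - Phi (cs!0)\<bar> \<le> 2 * int k"
      using sol_inv[OF sol _ kl] unfolding I_def by simp
    have last: "cs ! k = last cs" using ne unfolding k_def by (simp add: last_conv_nth)
    obtain p b where lc: "last cs = (T, p, b)" using sol unfolding is_solution_def
      by (metis prod.collapse)
    have fT: "finite T" unfolding T_def by simp
    have "\<not> b" using inv cI cT unfolding last lc tiles_def by auto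
    then have P1: "Phi (cs!k) = sum snd T" unfolding last lc Phi_def by simp
    have "cs ! 0 = (I, line_node n, False)" using sol ne unfolding is_solution_def by (simp add: hd_conv_nth)
    then have P0: "Phi (cs!0) = sum snd I" unfolding Phi_def by simp
    have d2: "(\<Sum>i\<in>A. 2 * int i) = 2 * (\<Sum>i\<in>A. int i)" for A :: "nat set" by (simp add: sum_distrib_left)
    have "sum snd T - sum snd I = 2 * (int m * int n)"
      unfolding T_def I_def sum_line using gauss_diff[of m n]
      unfolding d2 by (simp add: algebra_simps)
    then have "2 * (int m * int n) \<le> 2 * int k" using inv P0 P1 by auto
    then have "int (m * n) \<le> int k" by simp
    then have "m * n \<le> k" by linarith
    then show ?thesis unfolding k_def by (metis mult_1 of_nat_le_iff of_nat_mult)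
  qed
  show "let I = line_node ` {1..n}; T = line_node ` {m+1..n+m}; p0 = line_node n in
        valid_instance I T p0 \<and> card I = n \<and> card T = n \<and> card (I - T) = m \<and>
        simply_conn I \<and> simply_conn T \<and>
        (\<forall>cs. is_solution I T p0 cs \<longrightarrow> real (length cs - 1) \<ge> 1 * real m * real n)"
    unfolding Let_def I_def[symmetric] T_def[symmetric]
    using vi cI cT cImT sI sT lb by blast
qed simp

end
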